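(* For every integer $n \ge 2$, $$\chi_{2K_2}(P_n) \ge \sqrt{2\left\lceil \frac{n-1}{3} \right\rceil + \frac14} + \frac12.$$
   Context: All graphs are finite and simple. For a fixed bipartite graph $H$, a proper vertex coloring of a graph $G$ is called an $H$-avoiding coloring if for any two color classes, the subgraph of $G$ induced by their union contains no induced subgraph isomorphic to $H$. $\chi_H(G)$ denotes the minimum number of colors in an $H$-avoiding coloring of $G$. $P_n$ is the path on $n$ vertices and $2K_2$ is the disjoint union of two edges. *)

theory Defs
  imports Complex_Main
begin

definition simple_graph :: "'a set \<Rightarrow> ('a \<Rightarrow> 'a \<Rightarrow> bool) \<Rightarrow> bool" where
  "simple_graph V E \<longleftrightarrow> finite V \<and>
     (\<forall>x y. E x y \<longrightarrow> x \<in> V \<and> y \<in> V \<and> x \<noteq> y \<and> E y x)"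

definition has_induced_copy ::
  "'b set \<Rightarrow> ('b \<Rightarrow> 'b \<Rightarrow> bool) \<Rightarrow> 'a set \<Rightarrow> ('a \<Rightarrow> 'a \<Rightarrow> bool) \<Rightarrow> bool" where
  "has_induced_copy VH EH S E \<longleftrightarrow>
     (\<exists>f. inj_on f VH \<and> f ` VH \<subseteq> S \<and>
          (\<forall>u\<in>VH. \<forall>v\<in>VH. EH u v \<longleftrightarrow> E (f u) (f v)))"

definition proper_coloring :: "'a set \<Rightarrow> ('a \<Rightarrow> 'a \<Rightarrow> bool) \<Rightarrow> nat \<Rightarrow> ('a \<Rightarrow> nat) \<Rightarrow> bool" where
  "proper_coloring V E k c \<longleftrightarrow>
     (\<forall>v\<in>V. c v < k) \<and> (\<forall>u\<in>V. \<forall>v\<in>V. E u v \<longrightarrow> c u \<noteq> c v)"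

definition H_avoiding_coloring ::
  "'b set \<Rightarrow> ('b \<Rightarrow> 'b \<Rightarrow> bool) \<Rightarrow> 'a set \<Rightarrow> ('a \<Rightarrow> 'a \<Rightarrow> bool) \<Rightarrow> nat \<Rightarrow> ('a \<Rightarrow> nat) \<Rightarrow> bool" where
  "H_avoiding_coloring VH EH V E k c \<longleftrightarrow>
     proper_coloring V E k c \<and>
     (\<forall>i j. i \<noteq> j \<longrightarrow> \<not> has_induced_copy VH EH {v\<in>V. c v = i \<or> c v = j} E)"

definition chi_H ::
  "'b set \<Rightarrow> ('b \<Rightarrow> 'b \<Rightarrow> bool) \<Rightarrow> 'a set \<Rightarrow> ('a \<Rightarrow> 'a \<Rightarrow> bool) \<Rightarrow> nat" where
  "chi_H VH EH V E = (LEAST k. \<exists>c. H_avoiding_coloring VH EH V E k c)"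

definition path_V :: "nat \<Rightarrow> nat set" where
  "path_V n = {0..<n}"

definition path_E :: "nat \<Rightarrow> nat \<Rightarrow> nat \<Rightarrow> bool" where
  "path_E n i j \<longleftrightarrow> i < n \<and> j < n \<and> (i + 1 = j \<or> j + 1 = i)"

definition twoK2_V :: "nat set" where
  "twoK2_V = {0, 1, 2, 3}"

definition twoK2_E :: "nat \<Rightarrow> nat \<Rightarrow> bool" where
  "twoK2_E i j \<longleftrightarrow> {i, j} = {0, 1} \<or> {i, j} = {2, 3::nat}"

end

theory Submission
  imports Defs
begin

lemma exists_col: "H_avoiding_coloring twoK2_V twoK2_E (path_V n) (path_E n) n (\<lambda>v. v)"
proof -
  have "\<not> has_induced_copy twoK2_V twoK2_E {v\<in>path_V n. v = i \<or> v = j} (path_E n)" for i j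
  proof
    assume "has_induced_copy twoK2_V twoK2_E {v\<in>path_V n. v = i \<or> v = j} (path_E n)"
    then obtain f where f: "inj_on f twoK2_V" "f ` twoK2_V \<subseteq> {v\<in>path_V n. v = i \<or> v = j}"
      unfolding has_induced_copy_def by blast
    have "card (f ` twoK2_V) = 4" using f(1) by (simp add: card_image twoK2_V_def)
    moreover have "card (f ` twoK2_V) \<le> card {i,j}"
      by (rule card_mono) (use f(2) in auto)
    moreover have "card {i,j} \<le> 2" by (simp add: card_insert_le_m1)
    ultimately show False by simp
  qed
  thus ?thesis unfolding H_avoiding_coloring_def proper_coloring_def path_V_def path_E_def by auto
qed

lemma copy:
  assumes "a + 3 \<le> b" "b + 1 < n" "i \<noteq> j"
    "{c a, c (a+1)} = {i, j}" "{c b, c (b+1)} = {i, j}"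
  shows "has_induced_copy twoK2_V twoK2_E {v\<in>path_V n. c v = i \<or> c v = j} (path_E n)"
proof -
  define f where "f = (\<lambda>u::nat. if u = 0 then a else if u = 1 then a+1 else if u = 2 then b else b+1)"
  have "inj_on f twoK2_V" using assms(1) unfolding inj_on_def f_def twoK2_V_def by auto
  moreover have "f ` twoK2_V \<subseteq> {v\<in>path_V n. c v = i \<or> c v = j}"
    using assms unfolding f_def twoK2_V_def path_V_def by (auto simp: doubleton_eq_iff)
  moreover have "\<forall>u\<in>twoK2_V. \<forall>v\<in>twoK2_V. twoK2_E u v \<longleftrightarrow> path_E n (f u) (f v)"
    using assms(1,2) unfolding f_def twoK2_V_def twoK2_E_def path_E_def
    by (auto simp: doubleton_eq_iff)
  ultimately show ?thesis unfolding has_induced_copy_def by blast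
qed

lemma small_diam:
  fixes X :: "nat set"
  assumes "finite X" "\<forall>x\<in>X. \<forall>y\<in>X. y < x + 3"
  shows "card X \<le> 3"
proof (cases "X = {}")
  case True thus ?thesis by simp
next
  case False
  let ?m = "Min X"
  have "X \<subseteq> {?m..?m+2}"
  proof
    fix y assume y: "y \<in> X"
    have "?m \<in> X" using Min_in assms(1) False by blast
    hence "y < ?m + 3" using assms(2) y by blast
    moreover have "?m \<le> y" using Min_le assms(1) y by blast
    ultimately show "y \<in> {?m..?m+2}" by simp
  qed
  hence "card X \<le> card {?m..?m+2}" by (rule card_mono[rotated]) simp
  thus ?thesis by simp
qed

theorem corollary1:
  fixes n :: nat
  assumes "n \<ge> 2"
  shows "real (chi_H twoK2_V twoK2_E (path_V n) (path_E n))
           \<ge> sqrt (2 * real_of_int \<lceil>(real n - 1) / 3\<rceil> + 1 / 4) + 1 / 2"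
proof -
  let ?k = "chi_H twoK2_V twoK2_E (path_V n) (path_E n)"
  obtain c where c: "H_avoiding_coloring twoK2_V twoK2_E (path_V n) (path_E n) ?k c"
    unfolding chi_H_def using LeastI_ex[of "\<lambda>k. \<exists>c. H_avoiding_coloring twoK2_V twoK2_E (path_V n) (path_E n) k c"] exists_col by blast
  have lt: "\<And>v. v < n \<Longrightarrow> c v < ?k" and pr: "\<And>v. v + 1 < n \<Longrightarrow> c v \<noteq> c (v+1)"
    and av: "\<And>i j. i \<noteq> j \<Longrightarrow> \<not> has_induced_copy twoK2_V twoK2_E {v\<in>path_V n. c v = i \<or> c v = j} (path_E n)"
    using c unfolding H_avoiding_coloring_def proper_coloring_def path_V_def path_E_def by auto
  define p where "p a = {c a, c (a+1)}" for a
  define A where "A = {0..<n-1}"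
  define B where "B = {S. S \<subseteq> {0..<?k} \<and> card S = 2}"
  have pB: "p ` A \<subseteq> B"
    using lt pr unfolding p_def A_def B_def by auto
  have fB: "finite B" unfolding B_def by simp
  have "A = (\<Union>S\<in>B. {a\<in>A. p a = S})" using pB by auto
  hence "card A \<le> (\<Sum>S\<in>B. card {a\<in>A. p a = S})" using card_UN_le[OF fB] by metis
  also have "\<dots> \<le> (\<Sum>S\<in>B. 3)"
  proof (rule sum_mono)
    fix S assume S: "S \<in> B"
    then obtain i j where ij: "S = {i,j}" "i \<noteq> j" unfolding B_def by (auto simp: card_2_iff)
    show "card {a\<in>A. p a = S} \<le> 3"
    proof (rule small_diam)
      show "finite {a\<in>A. p a = S}" unfolding A_def by simp
      show "\<forall>x\<in>{a\<in>A. p a = S}. \<forall>y\<in>{a\<in>A. p a = S}. y < x + 3"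
      proof (intro ballI, rule ccontr)
        fix x y assume x: "x \<in> {a\<in>A. p a = S}" and y: "y \<in> {a\<in>A. p a = S}" and "\<not> y < x + 3"
        hence "x + 3 \<le> y" by simp
        moreover have "y + 1 < n" using y unfolding A_def by auto
        ultimately have "has_induced_copy twoK2_V twoK2_E {v\<in>path_V n. c v = i \<or> c v = j} (path_E n)"
          using copy[of x y n i j c] x y ij unfolding p_def by auto
        thus False using av ij(2) by blast
      qed
    qed
  qed
  also have "\<dots> = 3 * (?k choose 2)" unfolding B_def by (simp add: n_subsets)
  finally have "n - 1 \<le> 3 * (?k choose 2)" unfolding A_def by simp
  hence le: "real n - 1 \<le> 3 * real (?k * (?k - 1) div 2)" using assms by (simp add: choose_two)
  have ev: "even (?k * (?k - 1))" by (cases "?k") auto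
  have "real (?k * (?k - 1) div 2) = real ?k * (real ?k - 1) / 2"
  proof (cases "?k = 0")
    case True thus ?thesis by simp
  next
    case False
    have "real (?k * (?k - 1) div 2) = real (?k * (?k - 1)) / 2"
      using ev by (simp add: real_of_nat_div)
    thus ?thesis using False by (simp add: of_nat_diff)
  qed
  with le have le2: "(real n - 1) / 3 \<le> real ?k * (real ?k - 1) / 2" by simp
  have k1: "real ?k \<ge> 1"
  proof (rule ccontr)
    assume "\<not> real ?k \<ge> 1" hence "?k = 0" by simp
    thus False using lt[of 0] assms by simp
  qed
  define m where "m = \<lceil>(real n - 1) / 3\<rceil>"
  have "real_of_int m \<le> real ?k * (real ?k - 1) / 2"
  proof -
    have "(real n - 1) / 3 \<le> real (?k * (?k - 1) div 2)" using le by simp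
    hence "m \<le> int (?k * (?k - 1) div 2)" unfolding m_def by (simp add: ceiling_le_iff)
    hence "real_of_int m \<le> real (?k * (?k - 1) div 2)" by linarith
    thus ?thesis using \<open>real (?k * (?k - 1) div 2) = _\<close> by simp
  qed
  hence "2 * real_of_int m + 1/4 \<le> (real ?k - 1/2)^2" by (simp add: power2_eq_square algebra_simps)
  hence "sqrt (2 * real_of_int m + 1/4) \<le> sqrt ((real ?k - 1/2)^2)" by (rule real_sqrt_le_mono)
  also have "\<dots> = real ?k - 1/2" using k1 by simp
  finally show ?thesis unfolding m_def by simp
qed

end
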